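(* Let $s\in\mathbb N$, $N\ge1$, and let $A_s,B_s>0$ be constants such that for all $N'\ge1$ and $r'\ge2$, if $\boldsymbol k_1,\dots,\boldsymbol k_{r'}$ are i.i.d. uniform on $Q_{N'}$ then $\Pr(\oplus_{i=1}^{r'}\boldsymbol k_i\in Q_{N'})\le A_s^{r'}N'^{r'/4}r'^{-B_s\sqrt{N'}}$. Let $I=\{V\subseteq Q_N:\mathrm{rank}(V)<|V|\}$, $I^*=\{V\in I:\text{every proper subset }W\subsetneq V\text{ has full rank}\}$, and $I^*_r=\{V\in I^*:|V|=r\}$. Then for all $r\ge2$, $$|I^*_{r+1}|\le\frac{|Q_N|^r}{(r+1)!}A_s^rN^{r/4}r^{-B_s\sqrt N}.$$
   Context: For $k\in\mathbb N_0$, $k=\sum_{\ell\ge1}a_\ell2^{\ell-1}$, $\kappa=\{\ell:a_\ell=1\}$; for $\boldsymbol k\in\mathbb N_0^s$ with digit sets $\kappa_j$, $\|\boldsymbol\kappa\|_1=\sum_j\sum_{\ell\in\kappa_j}\ell$; $Q_N=\{\boldsymbol k\in\mathbb N_0^s\setminus\{\boldsymbol0\}:\|\boldsymbol\kappa\|_1\le N\}$. $\oplus$ is componentwise bitwise XOR on $\mathbb N_0^s$, making it an $\mathbb F_2$-vector space; the rank of a finite subset $V$ is the size of its largest linearly independent subset, and $V$ has full rank if $\mathrm{rank}(V)=|V|$. *)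

theory Defs
  imports Complex_Main
begin

text \<open>Vectors in N_0^s are represented as functions nat => nat vanishing outside {..<s}.\<close>

definition vxor :: "(nat \<Rightarrow> nat) \<Rightarrow> (nat \<Rightarrow> nat) \<Rightarrow> (nat \<Rightarrow> nat)" where
  "vxor a b = (\<lambda>j. xor (a j) (b j))"

definition vzero :: "nat \<Rightarrow> nat" where
  "vzero = (\<lambda>_. 0)"

definition digits :: "nat \<Rightarrow> nat set" where
  "digits k = {l. l \<ge> 1 \<and> bit k (l - 1)}"

definition wt :: "nat \<Rightarrow> (nat \<Rightarrow> nat) \<Rightarrow> nat" where
  "wt s k = (\<Sum>j<s. \<Sum>l\<in>digits (k j). l)"

definition Q :: "nat \<Rightarrow> nat \<Rightarrow> (nat \<Rightarrow> nat) set" where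
  "Q s N = {k. (\<forall>j\<ge>s. k j = 0) \<and> k \<noteq> vzero \<and> wt s k \<le> N}"

definition xsum :: "(nat \<Rightarrow> nat) set \<Rightarrow> (nat \<Rightarrow> nat)" where
  "xsum V = Finite_Set.fold vxor vzero V"

definition xsum_list :: "(nat \<Rightarrow> nat) list \<Rightarrow> (nat \<Rightarrow> nat)" where
  "xsum_list ks = foldr vxor ks vzero"

text \<open>Linear independence over F_2: no nontrivial F_2-combination (= nonempty subset sum) vanishes.\<close>
definition lin_indep :: "(nat \<Rightarrow> nat) set \<Rightarrow> bool" where
  "lin_indep V \<longleftrightarrow> (\<forall>W\<subseteq>V. W \<noteq> {} \<longrightarrow> xsum W \<noteq> vzero)"

definition rank :: "(nat \<Rightarrow> nat) set \<Rightarrow> nat" where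
  "rank V = Max (card ` {W. W \<subseteq> V \<and> lin_indep W})"

definition full_rank :: "(nat \<Rightarrow> nat) set \<Rightarrow> bool" where
  "full_rank V \<longleftrightarrow> rank V = card V"

definition Idep :: "nat \<Rightarrow> nat \<Rightarrow> (nat \<Rightarrow> nat) set set" where
  "Idep s N = {V. V \<subseteq> Q s N \<and> rank V < card V}"

definition Istar :: "nat \<Rightarrow> nat \<Rightarrow> (nat \<Rightarrow> nat) set set" where
  "Istar s N = {V \<in> Idep s N. \<forall>W. W \<subset> V \<longrightarrow> full_rank W}"

definition Istar_r :: "nat \<Rightarrow> nat \<Rightarrow> nat \<Rightarrow> (nat \<Rightarrow> nat) set set" where
  "Istar_r s N r = {V \<in> Istar s N. card V = r}"

text \<open>Pr(xor of r i.i.d. uniform elements of Q_N lies in Q_N), as a uniform count over r-tuples.\<close>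
definition prob_xor_in_Q :: "nat \<Rightarrow> nat \<Rightarrow> nat \<Rightarrow> real" where
  "prob_xor_in_Q s N r =
     real (card {ks. length ks = r \<and> set ks \<subseteq> Q s N \<and> xsum_list ks \<in> Q s N})
     / real (card (Q s N)) ^ r"

end

theory Submission
  imports Defs
begin

lemma bit_le: fixes k :: nat assumes "bit k i" shows "2 ^ i \<le> k"
proof (rule ccontr)
  assume "\<not> 2 ^ i \<le> k" then have "k div 2 ^ i = 0" by simp
  with assms show False by (simp add: bit_iff_odd)
qed

lemma digits_sub: "digits k \<subseteq> {1..k}"
proof
  fix l assume "l \<in> digits k"
  then have l: "l \<ge> 1" "bit k (l - 1)" by (auto simp: digits_def)
  have "l - 1 < 2 ^ (l - 1)" by (rule less_exp)
  with bit_le[OF l(2)] have "l - 1 < k" by linarith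
  with l(1) show "l \<in> {1..k}" by auto
qed

lemma finite_digits: "finite (digits k)"
  using digits_sub finite_subset by blast

lemma big_bit: fixes n :: nat assumes "n \<ge> 2 ^ N" shows "\<exists>i\<ge>N. bit n i"
proof (rule ccontr)
  assume "\<not> (\<exists>i\<ge>N. bit n i)"
  then have "take_bit N n = n" by (intro bit_eqI) (metis bit_take_bit_iff not_le)
  moreover have "take_bit N n < 2 ^ N" by simp
  ultimately show False using assms by simp
qed

lemma Q_bound: assumes "k \<in> Q s N" shows "k j < 2 ^ N"
proof (rule ccontr)
  assume "\<not> k j < 2 ^ N"
  then have ge: "k j \<ge> 2 ^ N" by simp
  then obtain i where i: "i \<ge> N" "bit (k j) i" using big_bit by blast
  have "(0::nat) < 2 ^ N" by simp
  then have "k j \<noteq> 0" using ge by linarith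
  then have js: "j < s" using assms by (auto simp: Q_def)
  have "Suc i \<in> digits (k j)" using i by (auto simp: digits_def)
  then have "Suc i \<le> (\<Sum>l\<in>digits (k j). l)"
    using finite_digits by (metis member_le_sum zero_le)
  also have "\<dots> \<le> wt s k" unfolding wt_def
    using js member_le_sum[of j "{..<s}" "\<lambda>j. \<Sum>l\<in>digits (k j). l"] by auto
  finally show False using assms i by (auto simp: Q_def)
qed

lemma finite_Q: "finite (Q s N)"
proof -
  have "Q s N \<subseteq> {f. \<forall>x. (x \<in> {..<s} \<longrightarrow> f x \<in> {..<2^N}) \<and> (x \<notin> {..<s} \<longrightarrow> f x = 0)}"
    using Q_bound by (auto simp: Q_def)
  moreover have "finite {f. \<forall>x. (x \<in> {..<s} \<longrightarrow> f x \<in> {..<(2::nat)^N}) \<and> (x \<notin> {..<s} \<longrightarrow> f x = 0)}"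
    by (intro finite_set_of_finite_funs) auto
  ultimately show ?thesis using finite_subset by blast
qed

lemma cfc: "comp_fun_commute_on UNIV vxor"
  unfolding comp_fun_commute_on_def vxor_def
  by (auto simp: fun_eq_iff ac_simps)

lemma xsum_insert: "finite A \<Longrightarrow> x \<notin> A \<Longrightarrow> xsum (insert x A) = vxor x (xsum A)"
  unfolding xsum_def using comp_fun_commute_on.fold_insert[OF cfc] by blast

lemma xsum_list_set: "distinct ks \<Longrightarrow> xsum_list ks = xsum (set ks)"
  by (induction ks) (auto simp: xsum_list_def xsum_def[symmetric] xsum_insert, simp add: xsum_def)

lemma vxor_cancel: "vxor v w = vzero \<Longrightarrow> v = w"
proof -
  assume "vxor v w = vzero"
  then have "\<And>j. xor (v j) (w j) = 0" by (auto simp: vxor_def vzero_def fun_eq_iff)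
  then show "v = w" by (auto simp: fun_eq_iff)
    (metis xor_self_eq xor.left_neutral xor.assoc xor.commute)
qed

lemma indep_rank: assumes "finite V" "lin_indep V" shows "rank V = card V"
proof -
  have "card ` {W. W \<subseteq> V \<and> lin_indep W} \<subseteq> {..card V}"
    using assms by (auto intro: card_mono)
  then have fin: "finite (card ` {W. W \<subseteq> V \<and> lin_indep W})" using finite_subset by blast
  have "card V \<in> card ` {W. W \<subseteq> V \<and> lin_indep W}" using assms by auto
  then show ?thesis unfolding rank_def
    using fin \<open>card ` _ \<subseteq> _\<close> by (intro Max_eqI) auto
qed

lemma full_rank_indep: assumes "finite W" "full_rank W" shows "lin_indep W"
proof -
  have "lin_indep {}" by (auto simp: lin_indep_def)
  then have ne: "card ` {X. X \<subseteq> W \<and> lin_indep X} \<noteq> {}" by blast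
  have "card ` {X. X \<subseteq> W \<and> lin_indep X} \<subseteq> {..card W}"
    using assms by (auto intro: card_mono)
  then have fin: "finite (card ` {X. X \<subseteq> W \<and> lin_indep X})" using finite_subset by blast
  have "rank W \<in> card ` {X. X \<subseteq> W \<and> lin_indep X}" unfolding rank_def
    using Max_in[OF fin ne] .
  then obtain X where X: "X \<subseteq> W" "lin_indep X" "card X = card W"
    using assms by (auto simp: full_rank_def)
  then have "X = W" using assms card_subset_eq by blast
  with X show ?thesis by simp
qed

lemma Istar_xsum: assumes "V \<in> Istar s N" "finite V" shows "xsum V = vzero"
proof -
  have dep: "rank V < card V" "\<And>W. W \<subset> V \<Longrightarrow> full_rank W"
    using assms by (auto simp: Istar_def Idep_def)
  have "\<not> lin_indep V" using dep indep_rank[OF assms(2)] by auto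
  then obtain W where W: "W \<subseteq> V" "W \<noteq> {}" "xsum W = vzero" by (auto simp: lin_indep_def)
  show ?thesis
  proof (cases "W = V")
    case True then show ?thesis using W by simp
  next
    case False
    then have "W \<subset> V" using W by auto
    then have "lin_indep W" using dep(2) full_rank_indep assms(2) finite_subset W(1) by blast
    then show ?thesis using W by (auto simp: lin_indep_def)
  qed
qed

definition PV :: "(nat \<Rightarrow> nat) set \<Rightarrow> nat \<Rightarrow> (nat \<Rightarrow> nat) list set" where
  "PV V r = {xs. length xs = r \<and> distinct xs \<and> set xs \<subseteq> V}"

lemma PV_props:
  assumes V: "V \<in> Istar_r s N (r + 1)" and ks: "ks \<in> PV V r" and r: "r \<ge> 2"
  shows "V = insert (xsum_list ks) (set ks)" "xsum_list ks \<in> Q s N" "set ks \<subseteq> Q s N"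
proof -
  have cV: "card V = r + 1" and VI: "V \<in> Istar s N" and VQ: "V \<subseteq> Q s N"
    using V by (auto simp: Istar_r_def Istar_def Idep_def)
  have fV: "finite V" using cV r card.infinite by fastforce
  have k: "length ks = r" "distinct ks" "set ks \<subseteq> V" using ks by (auto simp: PV_def)
  have "card (set ks) = r" using k distinct_card by blast
  then have "set ks \<subset> V" using cV k(3) by auto
  then obtain v where v: "v \<in> V" "v \<notin> set ks" by blast
  have "card (insert v (set ks)) = r + 1" using v \<open>card (set ks) = r\<close> by simp
  then have Veq: "V = insert v (set ks)"
    using card_subset_eq[OF fV] v k(3) cV by (metis insert_subset)
  have "xsum V = vzero" using Istar_xsum[OF VI fV] .
  then have "vxor v (xsum (set ks)) = vzero" using Veq xsum_insert v by simp
  then have "v = xsum_list ks" using vxor_cancel xsum_list_set k(2) by simp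
  then show "V = insert (xsum_list ks) (set ks)" using Veq by simp
  show "xsum_list ks \<in> Q s N" using \<open>v = _\<close> v VQ by auto
  show "set ks \<subseteq> Q s N" using k VQ by auto
qed

lemma prod2: "\<Prod> {2..Suc n} = (fact (Suc n) :: nat)"
proof (induction n)
  case 0 then show ?case by simp
next
  case (Suc n)
  have "{2..Suc (Suc n)} = insert (Suc (Suc n)) {2..Suc n}" by auto
  then show ?case using Suc by (simp add: fact_Suc)
qed

theorem lemma6:
  fixes s N r :: nat and A B :: real
  assumes "N \<ge> 1" and "A > 0" and "B > 0"
    and hyp: "\<And>N' r'. N' \<ge> 1 \<Longrightarrow> r' \<ge> 2 \<Longrightarrow>
       prob_xor_in_Q s N' r' \<le> A ^ r' * real N' powr (real r' / 4) * real r' powr (- B * sqrt (real N'))"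
    and "r \<ge> 2"
  shows "real (card (Istar_r s N (r + 1)))
           \<le> real (card (Q s N)) ^ r / fact (r + 1) * A ^ r * real N powr (real r / 4)
              * real r powr (- B * sqrt (real N))"
proof -
  let ?I = "Istar_r s N (r + 1)"
  let ?L = "{ks. length ks = r \<and> set ks \<subseteq> Q s N \<and> xsum_list ks \<in> Q s N}"
  let ?b = "A ^ r * real N powr (real r / 4) * real r powr (- B * sqrt (real N))"
  have r2: "r \<ge> 2" by fact
  have fQ: "finite (Q s N)" by (rule finite_Q)
  have fI: "finite ?I"
  proof -
    have "?I \<subseteq> Pow (Q s N)" unfolding Istar_r_def Istar_def Idep_def by blast
    then show ?thesis using fQ finite_subset by blast
  qed
  have fL: "finite ?L"
  proof -
    have "?L \<subseteq> {xs. set xs \<subseteq> Q s N \<and> length xs = r}" by blast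
    then show ?thesis using finite_lists_length_eq[OF fQ, of r] finite_subset by blast
  qed
  have cardPV: "card (PV V r) = fact (r + 1)" if "V \<in> ?I" for V
  proof -
    have cV: "card V = r + 1" using that unfolding Istar_r_def by blast
    then have fV: "finite V" using r2 card.infinite by fastforce
    have "card (PV V r) = \<Prod> {card V - r + 1..card V}"
      unfolding PV_def using card_lists_distinct_length_eq[OF fV] cV by simp
    also have "{card V - r + 1..card V} = {2..Suc r}" using cV by simp
    also have "\<Prod> {2..Suc r} = fact (Suc r)" by (rule prod2)
    finally show ?thesis by simp
  qed
  have sub: "(\<Union>V\<in>?I. PV V r) \<subseteq> ?L"
  proof
    fix ks assume "ks \<in> (\<Union>V\<in>?I. PV V r)"
    then obtain V where V: "V \<in> ?I" and ks: "ks \<in> PV V r" by blast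
    have "length ks = r" using ks unfolding PV_def by blast
    then show "ks \<in> ?L" using PV_props(2,3)[OF V ks r2] by blast
  qed
  have disj: "PV V r \<inter> PV W r = {}" if "V \<in> ?I" "W \<in> ?I" "V \<noteq> W" for V W
  proof (rule ccontr)
    assume "PV V r \<inter> PV W r \<noteq> {}"
    then obtain ks where "ks \<in> PV V r" "ks \<in> PV W r" by blast
    then have "V = insert (xsum_list ks) (set ks)" "W = insert (xsum_list ks) (set ks)"
      using PV_props(1)[OF that(1) _ r2] PV_props(1)[OF that(2) _ r2] by blast+
    then have "V = W" by simp
    with that(3) show False by contradiction
  qed
  have fPV: "finite (PV V r)" if "V \<in> ?I" for V
  proof -
    have "PV V r \<subseteq> ?L" using sub that by blast
    then show ?thesis using fL by (rule finite_subset)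
  qed
  have "card (\<Union>V\<in>?I. PV V r) = (\<Sum>V\<in>?I. card (PV V r))"
  proof (rule card_UN_disjoint[OF fI])
    show "\<forall>V\<in>?I. finite (PV V r)" using fPV by blast
    show "\<forall>V\<in>?I. \<forall>W\<in>?I. V \<noteq> W \<longrightarrow> PV V r \<inter> PV W r = {}" using disj by blast
  qed
  also have "\<dots> = (\<Sum>V\<in>?I. fact (r + 1))" using cardPV by (intro sum.cong) auto
  also have "\<dots> = card ?I * fact (r + 1)" by simp
  finally have "card ?I * fact (r + 1) \<le> card ?L"
    using card_mono[OF fL sub] by linarith
  then have "real (card ?I * fact (r + 1)) \<le> real (card ?L)"
    by (rule of_nat_mono)
  then have main: "real (card ?I) * fact (r + 1) \<le> real (card ?L)"
    by (simp only: of_nat_mult of_nat_fact)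
  show ?thesis
  proof (cases "card (Q s N) = 0")
    case True
    then have "Q s N = {}" using fQ by simp
    have "?I = {}"
    proof (rule ccontr)
      assume "?I \<noteq> {}"
      then obtain V where "V \<in> ?I" by blast
      then have "V \<subseteq> Q s N" "card V = r + 1" unfolding Istar_r_def Istar_def Idep_def by blast+
      then show False using \<open>Q s N = {}\<close> by simp
    qed
    moreover have e: "real (card (Q s N)) ^ r = 0" using True r2 by simp
    ultimately show ?thesis unfolding e by simp
  next
    case False
    have "prob_xor_in_Q s N r \<le> ?b" using hyp assms(1) r2 by blast
    moreover have "prob_xor_in_Q s N r = real (card ?L) / real (card (Q s N)) ^ r"
      unfolding prob_xor_in_Q_def ..
    moreover have "real (card (Q s N)) ^ r > 0" using False by simp
    ultimately have "real (card ?L) \<le> ?b * real (card (Q s N)) ^ r"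
      by (simp add: divide_le_eq)
    with main have "real (card ?I) * fact (r + 1) \<le> real (card (Q s N)) ^ r * ?b" by argo
    then have "real (card ?I) \<le> real (card (Q s N)) ^ r * ?b / fact (r + 1)"
      by (simp add: le_divide_eq)
    then show ?thesis by (simp add: field_simps)
  qed
qed

end
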